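(* The set $\mathscr U_k:=\{\underline A\in\mathcal C_k(d):\Theta_k(\underline A)>0\}$ is open and dense in $\mathcal C_k(d)$, where $\Theta_k(\underline A):=\min\{\|\wedge_k(A_aA_b)\|:1\le a,b\le m\}$ for $\underline A=(A_1,\dots,A_m)$.
   Context: Fix integers $m,d\ge1$ and $1\le k\le d$. $\mathcal C_k(d)$ is the set of tuples $\underline A=(A_1,\dots,A_m)\in{\rm Mat}(d,\mathbb R)^m$ with $\mathrm{rank}(A_j)=k$ for all $j$, with the subspace topology from ${\rm Mat}(d,\mathbb R)^m\cong\mathbb R^{md^2}$. $\wedge_kA$ is the $k$-th exterior power of a matrix $A$ (the matrix of its $k\times k$ minors). *)

theory Defs
  imports "HOL-Analysis.Analysis"
begin

text \<open>Square d x d real matrices are \<open>real^'n^'n\<close> with \<open>d = CARD('n)\<close>; the index type is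
  linearly ordered so that k x k minors have a well-defined sign.  An m-tuple of matrices
  is an element of \<open>(real^'n^'n)^'m\<close> with \<open>m = CARD('m)\<close>.\<close>

definition minor :: "nat \<Rightarrow> real^('n::{finite,linorder})^('n::{finite,linorder}) \<Rightarrow> ('n::{finite,linorder}) set \<Rightarrow> ('n::{finite,linorder}) set \<Rightarrow> real" where
  "minor k A I J =
     (let rs = sorted_list_of_set I; cs = sorted_list_of_set J in
      \<Sum>p\<in>{p. p permutes {0..<k}}. of_int (sign p) * (\<Prod>i<k. A $ (rs ! i) $ (cs ! p i)))"

text \<open>The k-th exterior power (compound matrix) of A, indexed by the k-subsets of the index set.\<close>
definition wedge :: "nat \<Rightarrow> real^('n::{finite,linorder})^('n::{finite,linorder}) \<Rightarrow> ('n::{finite,linorder}) set \<Rightarrow> ('n::{finite,linorder}) set \<Rightarrow> real" where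
  "wedge k A I J = (if card I = k \<and> card J = k then minor k A I J else 0)"

definition wedge_norm :: "nat \<Rightarrow> real^('n::{finite,linorder})^('n::{finite,linorder}) \<Rightarrow> real" where
  "wedge_norm k (A :: real^('n::{finite,linorder})^('n::{finite,linorder})) =
     sqrt (\<Sum>I\<in>{I::'n set. card I = k}. \<Sum>J\<in>{J::'n set. card J = k}. (wedge k A I J)\<^sup>2)"

definition Theta :: "nat \<Rightarrow> (real^('n::{finite,linorder})^('n::{finite,linorder}))^('m::finite) \<Rightarrow> real" where
  "Theta k A = Min {wedge_norm k (A $ a ** A $ b) | a b. True}"

definition Ck :: "nat \<Rightarrow> ((real^('n::{finite,linorder})^('n::{finite,linorder}))^('m::finite)) set" where
  "Ck k = {A. \<forall>j. rank (A $ j) = k}"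

definition Uk :: "nat \<Rightarrow> ((real^('n::{finite,linorder})^('n::{finite,linorder}))^('m::finite)) set" where
  "Uk k = {A \<in> Ck k. Theta k A > 0}"

end

theory Submission imports Defs "Jordan_Normal_Form.Determinant" begin
no_notation Matrix.vec_index (infixl "$" 100)
no_notation Matrix.scalar_prod (infix "\<bullet>" 70)

definition pfun :: "(real \<Rightarrow> real) \<Rightarrow> bool" where
  "pfun f \<longleftrightarrow> (\<exists>p. \<forall>t. f t = poly p t)"

lemma pfun_const[intro]: "pfun (\<lambda>t. c)"
  unfolding pfun_def by (rule exI[of _ "[:c:]"]) simp
lemma pfun_id[intro]: "pfun (\<lambda>t. t)"
  unfolding pfun_def by (rule exI[of _ "[:0,1:]"]) simp
lemma pfun_add[intro]: "pfun f \<Longrightarrow> pfun g \<Longrightarrow> pfun (\<lambda>t. f t + g t)"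
  unfolding pfun_def by (metis poly_add)
lemma pfun_diff[intro]: "pfun f \<Longrightarrow> pfun g \<Longrightarrow> pfun (\<lambda>t. f t - g t)"
  unfolding pfun_def by (metis poly_diff)
lemma pfun_mult[intro]: "pfun f \<Longrightarrow> pfun g \<Longrightarrow> pfun (\<lambda>t. f t * g t)"
  unfolding pfun_def by (metis poly_mult)
lemma pfun_divc[intro]: "pfun f \<Longrightarrow> pfun (\<lambda>t. f t / c)"
  using pfun_mult[of f "\<lambda>t. 1/c"] pfun_const[of "1/c"] by simp
lemma pfun_sum[intro]: "(\<And>x. x \<in> S \<Longrightarrow> pfun (f x)) \<Longrightarrow> pfun (\<lambda>t. \<Sum>x\<in>S. f x t)"
proof (induction S rule: infinite_finite_induct)
  case (infinite A) then show ?case by auto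
next
  case empty then show ?case by auto
next
  case (insert x F) then show ?case by (simp add: pfun_add)
qed
lemma pfun_prod[intro]: "(\<And>x. x \<in> S \<Longrightarrow> pfun (f x)) \<Longrightarrow> pfun (\<lambda>t. \<Prod>x\<in>S. f x t)"
proof (induction S rule: infinite_finite_induct)
  case (infinite A) then show ?case by auto
next
  case empty then show ?case by auto
next
  case (insert x F) then show ?case by (simp add: pfun_mult)
qed
lemma pfun_roots:
  assumes "pfun f" "f t0 \<noteq> 0" shows "finite {t. f t = 0}"
proof -
  obtain p where p: "\<And>t. f t = poly p t" using assms(1) unfolding pfun_def by blast
  have "p \<noteq> 0" using assms(2) p by auto
  then show ?thesis using poly_roots_finite[of p] p by simp
qed
lemma poly_cont: "continuous_on UNIV (poly (p::real poly))"
  by (induction p) (auto intro!: continuous_intros)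
lemma pfun_cont: "pfun f \<Longrightarrow> continuous_on UNIV f"
  unfolding pfun_def using poly_cont by (metis ext)

definition pmat :: "(real \<Rightarrow> real^'n^'m) \<Rightarrow> bool" where
  "pmat P \<longleftrightarrow> (\<forall>i j. pfun (\<lambda>t. P t $ i $ j))"

lemma pmat_const: "pmat (\<lambda>t. M)" unfolding pmat_def by auto
lemma pmat_mult: "pmat P \<Longrightarrow> pmat Q \<Longrightarrow> pmat (\<lambda>t. P t ** Q t)"
  unfolding pmat_def matrix_matrix_mult_def by (auto intro!: pfun_sum pfun_mult)
lemma pmat_scale: "pfun c \<Longrightarrow> pmat (\<lambda>t. c t *\<^sub>R M)"
  unfolding pmat_def by auto
lemma pmat_add: "pmat P \<Longrightarrow> pmat Q \<Longrightarrow> pmat (\<lambda>t. P t + Q t)"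
  unfolding pmat_def by auto
lemma pmat_sum: "(\<And>x. x \<in> S \<Longrightarrow> pmat (P x)) \<Longrightarrow> pmat (\<lambda>t. \<Sum>x\<in>S. P x t)"
  unfolding pmat_def by (auto simp: sum_component)
lemma pmat_det: fixes P :: "real \<Rightarrow> real^'n^'n"
  shows "pmat P \<Longrightarrow> pfun (\<lambda>t. Determinants.det (P t))"
  unfolding pmat_def Determinants.det_def by (auto intro!: pfun_sum pfun_mult pfun_prod)
lemma pmat_minor: fixes P :: "real \<Rightarrow> real^('n::{finite,linorder})^('n::{finite,linorder})"
  shows "pmat P \<Longrightarrow> pfun (\<lambda>t. minor k (P t) I J)"
  unfolding pmat_def minor_def Let_def by (auto intro!: pfun_sum pfun_mult pfun_prod)


lemma indep_subfamily:
  fixes f :: "'i \<Rightarrow> 'v::real_vector"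
  shows "\<exists>R. card R = dim (range f) \<and> inj_on f R \<and> independent (f ` R)"
proof -
  obtain B where B: "B \<subseteq> range f" "independent B" "range f \<subseteq> span B" "card B = dim (range f)"
    by (rule basis_exists)
  define g where "g v = (SOME i. f i = v)" for v
  have fg: "f (g v) = v" if "v \<in> B" for v
  proof -
    from that B(1) obtain i where "f i = v" by blast
    then show ?thesis unfolding g_def by (rule someI)
  qed
  have inj: "inj_on g B" by (metis fg inj_onI)
  have img: "f ` (g ` B) = B" using fg by (force simp: image_image)
  have "inj_on f (g ` B)" by (rule inj_onI) (auto simp: fg)
  moreover have "card (g ` B) = card B" using card_image[OF inj] .
  ultimately show ?thesis using B img by metis
qed

lemma minor_det: fixes A :: "real^('n::{finite,linorder})^('n::{finite,linorder})"
  shows "minor k A I J = Determinant.det (Matrix.mat k k (\<lambda>(i,j). A $ (sorted_list_of_set I ! i) $ (sorted_list_of_set J ! j)))"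
  unfolding minor_def Determinant.det_def Let_def by (simp add: atLeast0LessThan)

lemma rank_minor:
  fixes M :: "real^('n::{finite,linorder})^('n::{finite,linorder})"
  assumes "rank M = k"
  shows "\<exists>I J. card I = k \<and> card J = k \<and> minor k M I J \<noteq> 0"
proof -
  let ?rf = "\<lambda>i. Finite_Cartesian_Product.row i M"
  have "rank M = dim (range ?rf)" unfolding row_rank_def Finite_Cartesian_Product.rows_def by (simp add: full_SetCompr_eq)
  then obtain R where R: "card R = k" "inj_on ?rf R" "independent (?rf ` R)"
    using indep_subfamily[of ?rf] assms by metis
  define N where "N = ((\<chi> i. if i \<in> R then ?rf i else 0) :: real^('n::{finite,linorder})^('n::{finite,linorder}))"
  let ?nf = "\<lambda>i. Finite_Cartesian_Product.row i N"
  have nf: "?nf i = (if i \<in> R then ?rf i else 0)" for i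
    unfolding N_def by (simp add: Finite_Cartesian_Product.row_def vec_eq_iff)
  have sub1: "range ?nf \<subseteq> insert 0 (?rf ` R)" using nf by auto
  have sub2: "?rf ` R \<subseteq> range ?nf" using nf by (auto simp: image_iff)
  have "span (range ?nf) = span (?rf ` R)"
  proof
    show "span (range ?nf) \<subseteq> span (?rf ` R)"
      by (metis sub1 span_insert_0 span_mono)
    show "span (?rf ` R) \<subseteq> span (range ?nf)" by (rule span_mono[OF sub2])
  qed
  then have "dim (range ?nf) = dim (?rf ` R)" by (metis dim_span)
  also have "\<dots> = card (?rf ` R)" using R(3) by (rule dim_eq_card_independent)
  also have "\<dots> = k" using R by (simp add: card_image)
  finally have rN: "rank N = k" unfolding row_rank_def Finite_Cartesian_Product.rows_def by (simp add: full_SetCompr_eq)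
  let ?cf = "\<lambda>j. column j N"
  have "rank N = dim (range ?cf)" unfolding column_rank_def columns_def by (simp add: full_SetCompr_eq)
  then obtain J where J: "card J = k" "inj_on ?cf J" "independent (?cf ` J)"
    using indep_subfamily[of ?cf] rN by metis
  define rs where "rs = sorted_list_of_set R"
  define cs where "cs = sorted_list_of_set J"
  have rs: "length rs = k" "distinct rs" "set rs = R" using R(1) by (simp_all add: rs_def)
  have cs: "length cs = k" "distinct cs" "set cs = J" using J(1) by (simp_all add: cs_def)
  define S where "S = Matrix.mat k k (\<lambda>(i,j). M $ (rs ! i) $ (cs ! j))"
  have SC: "S \<in> carrier_mat k k" unfolding S_def by simp
  have "Determinant.det S \<noteq> 0"
  proof
    assume "Determinant.det S = 0"
    then obtain v where v: "v \<in> carrier_vec k" "v \<noteq> 0\<^sub>v k" "S *\<^sub>v v = 0\<^sub>v k"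
      using det_0_iff_vec_prod_zero_field[OF SC] by blast
    have "\<exists>l0<k. Matrix.vec_index v l0 \<noteq> 0"
    proof (rule ccontr)
      assume "\<not> ?thesis"
      then have "v = 0\<^sub>v k" using v(1) by (intro eq_vecI) auto
      with v(2) show False by simp
    qed
    then obtain l0 where l0: "l0 < k" "Matrix.vec_index v l0 \<noteq> 0" by blast
    have bij: "bij_betw (\<lambda>l. cs ! l) {..<k} J"
      using cs by (metis bij_betw_nth lessThan_atLeast0)
    define h where "h = inv_into {..<k} (\<lambda>l. cs ! l)"
    have hcs: "h (cs ! l) = l" if "l < k" for l
      unfolding h_def using bij that by (simp add: bij_betw_def inv_into_f_f)
    define u where "u w = Matrix.vec_index v (h (inv_into J ?cf w))" for w
    have ucf: "u (?cf j) = Matrix.vec_index v (h j)" if "j \<in> J" for j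
      unfolding u_def using inv_into_f_f[OF J(2) that] by simp
    have fin: "finite (?cf ` J)" by simp
    have "(\<Sum>w\<in>?cf ` J. u w *\<^sub>R w) = (\<Sum>j\<in>J. u (?cf j) *\<^sub>R ?cf j)"
      by (rule sum.reindex[OF J(2), unfolded comp_def])
    also have "\<dots> = (\<Sum>j\<in>J. Matrix.vec_index v (h j) *\<^sub>R ?cf j)"
      by (rule sum.cong) (simp_all add: ucf)
    also have "\<dots> = (\<Sum>l\<in>{..<k}. Matrix.vec_index v (h (cs ! l)) *\<^sub>R ?cf (cs ! l))"
      using sum.reindex_bij_betw[OF bij, of "\<lambda>j. Matrix.vec_index v (h j) *\<^sub>R ?cf j"] by simp
    also have "\<dots> = (\<Sum>l\<in>{..<k}. Matrix.vec_index v l *\<^sub>R ?cf (cs ! l))"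
      by (rule sum.cong) (simp_all add: hcs)
    also have "\<dots> = 0"
    proof (subst Finite_Cartesian_Product.vec_eq_iff, intro allI)
      fix r
      show "(\<Sum>l\<in>{..<k}. Matrix.vec_index v l *\<^sub>R ?cf (cs ! l)) $ r = 0 $ r"
      proof (cases "r \<in> R")
        case False
        then show ?thesis by (simp add: sum_component column_def N_def)
      next
        case True
        then obtain i where i: "i < k" "r = rs ! i" using rs by (metis in_set_conv_nth)
        have "(\<Sum>l\<in>{..<k}. Matrix.vec_index v l *\<^sub>R ?cf (cs ! l)) $ r
            = (\<Sum>l\<in>{..<k}. Matrix.vec_index v l * M $ r $ (cs ! l))"
          using True by (simp add: sum_component column_def N_def Finite_Cartesian_Product.row_def)
        also have "\<dots> = Matrix.vec_index (S *\<^sub>v v) i"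
          using i v(1) by (simp add: S_def Matrix.scalar_prod_def lessThan_atLeast0 mult.commute)
        also have "\<dots> = 0" using v(3) i by simp
        finally show ?thesis by simp
      qed
    qed
    finally have "(\<Sum>w\<in>?cf ` J. u w *\<^sub>R w) = 0" .
    moreover have "?cf (cs ! l0) \<in> ?cf ` J" using cs l0 by auto
    moreover have "u (?cf (cs ! l0)) \<noteq> 0" using ucf[of "cs ! l0"] cs l0 hcs by auto
    ultimately have "dependent (?cf ` J)"
      using real_vector.dependent_finite[OF fin] by blast
    then show False using J(3) by blast
  qed
  then have "minor k M R J \<noteq> 0" unfolding minor_det rs_def cs_def S_def .
  then show ?thesis using R(1) J(1) by blast
qed


lemma range_AT_inj:
  fixes A :: "real^'n^'n"
  assumes "x \<in> range ((*v) (transpose A))" "A *v x = 0"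
  shows "x = 0"
proof -
  obtain z where z: "x = transpose A *v z" using assms(1) by blast
  have "inner x x = inner (z v* A) x" by (simp add: z)
  also have "\<dots> = inner z (A *v x)" by (rule dot_lmul_matrix)
  also have "\<dots> = 0" using assms(2) by simp
  finally show ?thesis by simp
qed

lemma inj_on_linear_sub:
  assumes "linear f" "subspace S" "\<And>x. x \<in> S \<Longrightarrow> f x = 0 \<Longrightarrow> x = 0"
  shows "inj_on f S"
proof (rule inj_onI)
  fix x y assume xy: "x \<in> S" "y \<in> S" "f x = f y"
  then have "f (x - y) = 0" using assms(1) by (simp add: linear_diff)
  moreover have "x - y \<in> S" using xy assms(2) by (simp add: subspace_diff)
  ultimately have "x - y = 0" using assms(3) by blast
  then show "x = y" by simp
qed

lemma exists_X:
  fixes A B :: "real^'n^'n"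
  assumes "rank A = k" "rank B = k"
  shows "\<exists>X. rank (A ** X ** B) = k \<and> (A = B \<longrightarrow> rank (X ** A ** X ** B) = k)"
proof -
  define V where "V = range ((*v) B)"
  define R where "R = range ((*v) (transpose A))"
  have sV: "subspace V" unfolding V_def
    by (rule linear_subspace_image[OF matrix_vector_mul_linear subspace_UNIV])
  have sR: "subspace R" unfolding R_def
    by (rule linear_subspace_image[OF matrix_vector_mul_linear subspace_UNIV])
  have dV: "dim V = k" using assms(2) rank_dim_range[of B] by (simp add: V_def)
  have dR: "dim R = k" using assms(1) rank_dim_range[of "transpose A"] rank_transpose[of A]
    by (simp add: R_def)
  obtain f g where fg: "linear f" "f ` V = R" "\<And>x. x \<in> V \<Longrightarrow> g (f x) = x"
    using isometries_subspaces[OF sV sR] dV dR by metis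
  have injf: "inj_on f V" by (rule inj_on_inverseI[where g = g]) (use fg in auto)
  have injA: "inj_on ((*v) A) R"
    by (rule inj_on_linear_sub[OF matrix_vector_mul_linear sR]) (use range_AT_inj in \<open>auto simp: R_def\<close>)
  define X where "X = matrix f"
  have Xf: "(*v) X = f" unfolding X_def by (rule matrix_vector_mul(2)[OF fg(1)])
  have spR: "span R = R" using sR by (simp add: span_eq_iff)
  have spV: "span V = V" using sV by (simp add: span_eq_iff)
  have dAR: "dim ((*v) A ` R) = k"
    using dim_image_eq[OF matrix_vector_mul_linear, of A R] injA spR dR by simp
  have r1: "range ((*v) (A ** X ** B)) = (*v) A ` R"
    by (simp add: fg(2)[symmetric] V_def image_comp o_def matrix_vector_mul_assoc[symmetric] Xf)
  have "rank (A ** X ** B) = k" using r1 dAR rank_dim_range[of "A ** X ** B"] by simp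
  moreover have "rank (X ** A ** X ** B) = k" if AB: "A = B"
  proof -
    define W where "W = (*v) A ` R"
    have WV: "W \<subseteq> V" unfolding W_def V_def AB by auto
    have sW: "subspace W" unfolding W_def by (rule linear_subspace_image[OF matrix_vector_mul_linear sR])
    have spW: "span W = W" using sW by (simp add: span_eq_iff)
    have "dim (f ` W) = dim W"
      by (rule dim_image_eq[OF fg(1)]) (use spW injf WV inj_on_subset in metis)
    moreover have "range ((*v) (X ** A ** X ** B)) = f ` W"
      by (simp add: W_def fg(2)[symmetric] V_def image_comp o_def matrix_vector_mul_assoc[symmetric] Xf)
    ultimately show ?thesis using dAR rank_dim_range[of "X ** A ** X ** B"] by (simp add: W_def)
  qed
  ultimately show ?thesis by blast
qed


lemma wedge_norm_pos:
  fixes X :: "real^('n::{finite,linorder})^('n::{finite,linorder})"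
  assumes "card I = k" "card J = k" "minor k X I J \<noteq> 0"
  shows "wedge_norm k X > 0"
proof -
  let ?S = "{I::'n set. card I = k}"
  have fin: "finite ?S" by (rule finite_subset[of _ UNIV]) auto
  have "0 < (wedge k X I J)\<^sup>2" using assms unfolding wedge_def by simp
  also have "\<dots> \<le> (\<Sum>J'\<in>?S. (wedge k X I J')\<^sup>2)"
    by (rule member_le_sum) (use assms fin in auto)
  also have "\<dots> \<le> (\<Sum>I'\<in>?S. \<Sum>J'\<in>?S. (wedge k X I' J')\<^sup>2)"
    by (rule member_le_sum[where f = "\<lambda>I'. \<Sum>J'\<in>?S. (wedge k X I' J')\<^sup>2"]) (use assms fin in \<open>auto intro: sum_nonneg\<close>)
  finally show ?thesis unfolding wedge_norm_def by simp
qed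

lemma Theta_pos_iff:
  fixes A :: "(real^('n::{finite,linorder})^('n::{finite,linorder}))^('m::finite)"
  shows "Theta k A > 0 \<longleftrightarrow> (\<forall>a b. wedge_norm k (A$a ** A$b) > 0)"
proof -
  have eq: "{wedge_norm k (A $ a ** A $ b) | a b. True} = (\<lambda>(a,b). wedge_norm k (A $ a ** A $ b)) ` UNIV"
    by auto
  show ?thesis unfolding Theta_def eq
    by (subst Min_gr_iff) auto
qed

lemma cont_wedge:
  fixes a b :: "'m::finite"
  shows "continuous_on UNIV (\<lambda>A::(real^('n::{finite,linorder})^('n::{finite,linorder}))^'m. wedge_norm k (A$a ** A$b))"
  unfolding wedge_norm_def wedge_def minor_def matrix_matrix_mult_def Let_def
  by (auto intro!: continuous_intros)

lemma open_pos:
  shows "open {A::(real^('n::{finite,linorder})^('n::{finite,linorder}))^('m::finite). \<forall>a b. wedge_norm k (A$a ** A$b) > 0}"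
proof -
  have eq: "{A::(real^('n::{finite,linorder})^('n::{finite,linorder}))^('m::finite). \<forall>a b. wedge_norm k (A$a ** A$b) > 0}
     = (\<Inter>ab\<in>UNIV. {A. 0 < wedge_norm k (A $ fst ab ** A $ snd ab)})" by auto
  show ?thesis unfolding eq
    by (rule open_INT) (auto intro!: open_Collect_less continuous_on_const cont_wedge)
qed

lemma rank_inv_mult:
  fixes P M :: "real^'n^'n"
  assumes "Determinants.det P \<noteq> 0"
  shows "rank (P ** M) = rank M"
proof -
  obtain P' where P': "P' ** P = Finite_Cartesian_Product.mat 1"
    using assms invertible_det_nz[of P] unfolding invertible_def by blast
  have "rank M = rank (P' ** (P ** M))" by (simp add: matrix_mul_assoc P')
  also have "\<dots> \<le> rank (P ** M)" by (rule rank_mul_le_right)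
  finally show ?thesis using rank_mul_le_right[of P M] by simp
qed


lemma density:
  fixes A :: "(real^('n::{finite,linorder})^('n::{finite,linorder}))^('m::finite)"
  assumes rk: "\<And>j. rank (A $ j) = k"
  shows "A \<in> closure (Uk k)"
proof -
  have "\<forall>ab::'m\<times>'m. \<exists>X. rank (A $ fst ab ** X ** A $ snd ab) = k \<and>
          (A $ fst ab = A $ snd ab \<longrightarrow> rank (X ** A $ fst ab ** X ** A $ snd ab) = k)"
    using exists_X rk by blast
  then obtain X where X: "\<And>ab. rank (A $ fst ab ** X ab ** A $ snd ab) = k"
     "\<And>ab. A $ fst ab = A $ snd ab \<Longrightarrow> rank (X ab ** A $ fst ab ** X ab ** A $ snd ab) = k"
    by metis
  obtain f :: "'m\<times>'m \<Rightarrow> nat" where finj: "inj f"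
    using finite_imp_inj_to_nat_seg[of "UNIV :: ('m\<times>'m) set"] by auto
  define node where "node ab = real (f ab) + 1" for ab
  have node_inj: "node ab = node cd \<longleftrightarrow> ab = cd" for ab cd
    using finj unfolding node_def by (auto dest: injD)
  have node_nz: "node ab \<noteq> 0" for ab unfolding node_def by simp
  define Nd where "Nd = insert 0 (range node)"
  have finNd: "finite Nd" unfolding Nd_def by simp
  define L where "L s t = (\<Prod>u\<in>Nd-{s}. (t - u) / (s - u))" for s t
  have Lsame: "L s s = 1" for s unfolding L_def by (rule prod.neutral) auto
  have Lother: "L s s' = 0" if "s' \<in> Nd" "s' \<noteq> s" for s s'
    unfolding L_def using that finNd by (subst prod_zero_iff) auto
  have Lpf: "pfun (L s)" for s unfolding L_def by (intro pfun_prod pfun_divc pfun_diff pfun_id pfun_const)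
  define P where "P j t = L 0 t *\<^sub>R Finite_Cartesian_Product.mat 1 +
      (\<Sum>ab\<in>UNIV. L (node ab) t *\<^sub>R (if j = snd ab then X ab else Finite_Cartesian_Product.mat 1))"
    for j and t :: real
  have P0: "P j 0 = Finite_Cartesian_Product.mat 1" for j
  proof -
    have "L (node ab) 0 = 0" for ab by (rule Lother) (auto simp: Nd_def node_nz[symmetric])
    then show ?thesis unfolding P_def by (simp add: Lsame)
  qed
  have Pnode: "P j (node ab) = (if j = snd ab then X ab else Finite_Cartesian_Product.mat 1)" for j ab
  proof -
    have "L 0 (node ab) = 0" by (rule Lother) (auto simp: Nd_def node_nz)
    moreover have "L (node cd) (node ab) = (if cd = ab then 1 else 0)" for cd
      by (cases "cd = ab") (auto simp: Lsame node_inj Nd_def intro!: Lother)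
    ultimately show ?thesis unfolding P_def by (simp add: if_distrib[of "\<lambda>x. x *\<^sub>R _"] cong: if_cong)
  qed
  have Ppm: "pmat (P j)" for j
    unfolding P_def
    by (intro pmat_add pmat_scale pmat_sum Lpf)
  define Bt where "Bt t = (\<chi> j. P j t ** A $ j)" for t
  have Btj: "Bt t $ j = P j t ** A $ j" for t j unfolding Bt_def by simp
  have Bpm: "pmat (\<lambda>t. Bt t $ j)" for j
    unfolding Btj by (intro pmat_mult Ppm pmat_const)
  have rkM: "rank (Bt (node ab) $ fst ab ** Bt (node ab) $ snd ab) = k" for ab
  proof (cases "fst ab = snd ab")
    case True
    then show ?thesis using X(2)[of ab] by (simp add: Btj Pnode matrix_mul_assoc)
  next
    case False
    then show ?thesis using X(1)[of ab] by (simp add: Btj Pnode matrix_mul_assoc)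
  qed
  have "\<forall>ab. \<exists>I J. card I = k \<and> card J = k \<and> minor k (Bt (node ab) $ fst ab ** Bt (node ab) $ snd ab) I J \<noteq> 0"
    using rank_minor rkM by blast
  then obtain II JJ where IJ: "\<And>ab. card (II ab) = k" "\<And>ab. card (JJ ab) = k"
    "\<And>ab. minor k (Bt (node ab) $ fst ab ** Bt (node ab) $ snd ab) (II ab) (JJ ab) \<noteq> 0"
    by metis
  define fz where "fz ab t = minor k (Bt t $ fst ab ** Bt t $ snd ab) (II ab) (JJ ab)" for ab t
  have fzfin: "finite {t. fz ab t = 0}" for ab
    by (rule pfun_roots[of _ "node ab"]) (use IJ(3) in \<open>auto simp: fz_def intro!: pmat_minor pmat_mult Bpm\<close>)
  have dzfin: "finite {t. Determinants.det (P j t) = 0}" for j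
    by (rule pfun_roots[of _ 0]) (auto simp: P0 intro!: pmat_det Ppm)
  define Bad where "Bad = (\<Union>ab. {t. fz ab t = 0}) \<union> (\<Union>j. {t. Determinants.det (P j t) = 0})"
  have finBad: "finite Bad" unfolding Bad_def using fzfin dzfin by auto
  have good: "Bt t \<in> Uk k" if "t \<notin> Bad" for t
  proof -
    have "rank (Bt t $ j) = k" for j
      using that rank_inv_mult[of "P j t" "A $ j"] rk by (auto simp: Bad_def Btj)
    then have C: "Bt t \<in> Ck k" unfolding Ck_def by simp
    have "wedge_norm k (Bt t $ a ** Bt t $ b) > 0" for a b
      using wedge_norm_pos[OF IJ(1)[of "(a,b)"] IJ(2)[of "(a,b)"], of "Bt t $ a ** Bt t $ b"] that
      by (auto simp: Bad_def fz_def)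
    then have "Theta k (Bt t) > 0" using Theta_pos_iff by blast
    then show ?thesis using C unfolding Uk_def by simp
  qed
  have B0: "Bt 0 = A" unfolding Bt_def by (simp add: P0 Finite_Cartesian_Product.vec_eq_iff)
  have lim: "(Bt \<longlongrightarrow> A) (at 0)"
  proof (intro vec_tendstoI)
    fix j r c
    have "continuous_on UNIV (\<lambda>t. Bt t $ j $ r $ c)" using Bpm[of j] unfolding pmat_def
      by (blast intro: pfun_cont)
    then have "isCont (\<lambda>t. Bt t $ j $ r $ c) 0" by (simp add: continuous_on_eq_continuous_at)
    then show "((\<lambda>t. Bt t $ j $ r $ c) \<longlongrightarrow> A $ j $ r $ c) (at 0)"
      using B0 by (simp add: isCont_def)
  qed
  show ?thesis
  proof (rule iffD2[OF closure_approachable], intro allI impI)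
    fix e :: real assume e: "e > 0"
    have "eventually (\<lambda>t. dist (Bt t) A < e) (at 0)" using lim e by (rule tendstoD)
    then obtain d where d: "d > 0" "\<And>t. t \<noteq> 0 \<Longrightarrow> dist t 0 < d \<Longrightarrow> dist (Bt t) A < e"
      unfolding eventually_at by auto
    have "infinite {0<..<d}" using d(1) by simp
    then have "infinite ({0<..<d} - Bad)" using finBad by (rule Diff_infinite_finite[rotated])
    then obtain t where t: "t \<in> {0<..<d}" "t \<notin> Bad" by (metis Diff_iff finite.emptyI ex_in_conv)
    have "dist (Bt t) A < e" using t d(2)[of t] by (simp add: dist_real_def)
    then show "\<exists>y\<in>Uk k. dist y A < e" using good[OF t(2)] by blast
  qed
qed

theorem proposition4p3:
  fixes k :: nat
    and C U :: "((real^('n::{finite,linorder})^('n::{finite,linorder}))^('m::finite)) set"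
  assumes "1 \<le> k" and "k \<le> CARD('n)"
    and "C = Ck k" and "U = Uk k"
  shows "openin (top_of_set C) U \<and> C \<subseteq> closure U"
proof
  have "U = C \<inter> {A. \<forall>a b. wedge_norm k (A$a ** A$b) > 0}"
    using assms(3,4) Theta_pos_iff unfolding Uk_def by blast
  then show "openin (top_of_set C) U"
    using open_pos by (auto simp: openin_open)
  show "C \<subseteq> closure U"
    using assms(3,4) density unfolding Ck_def by blast
qed

end
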